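(* Let $(\mathcal{C},\wedge,S)$ be a braided monoidal category, $T\in\mathcal{C}$, and $s,t:T\to T$ endomorphisms. The following are equivalent: (1) $\beta_{T,T}=s\wedge t$; (2) $\beta_{T,T}=t\wedge s$; (3) $\beta_{T,T}=ts\wedge\mathrm{id}_T$; (4) $\beta_{T,T}=st\wedge\mathrm{id}_T$; (5) $\beta_{T,T}=\mathrm{id}_T\wedge ts$; (6) $\beta_{T,T}=\mathrm{id}_T\wedge st$.
   Context: $\beta_{T,T}:T\wedge T\to T\wedge T$ is the braiding isomorphism. *)

theory Defs
  imports Main
begin

locale category =
  fixes Ob :: "'o set" and Ar :: "'m set"
    and Dom :: "'m \<Rightarrow> 'o" and Cod :: "'m \<Rightarrow> 'o"
    and idm :: "'o \<Rightarrow> 'm" and C :: "'m \<Rightarrow> 'm \<Rightarrow> 'm"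
  assumes dom_ob: "f \<in> Ar \<Longrightarrow> Dom f \<in> Ob"
    and cod_ob: "f \<in> Ar \<Longrightarrow> Cod f \<in> Ob"
    and id_ar: "a \<in> Ob \<Longrightarrow> idm a \<in> Ar"
    and dom_id: "a \<in> Ob \<Longrightarrow> Dom (idm a) = a"
    and cod_id: "a \<in> Ob \<Longrightarrow> Cod (idm a) = a"
    and comp_ar: "\<lbrakk>f \<in> Ar; g \<in> Ar; Cod f = Dom g\<rbrakk> \<Longrightarrow> C g f \<in> Ar"
    and dom_comp: "\<lbrakk>f \<in> Ar; g \<in> Ar; Cod f = Dom g\<rbrakk> \<Longrightarrow> Dom (C g f) = Dom f"
    and cod_comp: "\<lbrakk>f \<in> Ar; g \<in> Ar; Cod f = Dom g\<rbrakk> \<Longrightarrow> Cod (C g f) = Cod g"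
    and comp_assoc: "\<lbrakk>f \<in> Ar; g \<in> Ar; h \<in> Ar; Cod f = Dom g; Cod g = Dom h\<rbrakk>
                      \<Longrightarrow> C h (C g f) = C (C h g) f"
    and comp_id_left: "f \<in> Ar \<Longrightarrow> C (idm (Cod f)) f = f"
    and comp_id_right: "f \<in> Ar \<Longrightarrow> C f (idm (Dom f)) = f"

definition hom :: "'m set \<Rightarrow> ('m \<Rightarrow> 'o) \<Rightarrow> ('m \<Rightarrow> 'o) \<Rightarrow> 'o \<Rightarrow> 'o \<Rightarrow> 'm set" where
  "hom Ar Dom Cod a b = {f \<in> Ar. Dom f = a \<and> Cod f = b}"

definition is_inverse ::
  "'m set \<Rightarrow> ('m \<Rightarrow> 'o) \<Rightarrow> ('m \<Rightarrow> 'o) \<Rightarrow> ('o \<Rightarrow> 'm) \<Rightarrow> ('m \<Rightarrow> 'm \<Rightarrow> 'm) \<Rightarrow> 'm \<Rightarrow> 'm \<Rightarrow> bool" where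
  "is_inverse Ar Dom Cod idm C f g \<longleftrightarrow>
     f \<in> Ar \<and> g \<in> Ar \<and> Dom g = Cod f \<and> Cod g = Dom f \<and>
     C g f = idm (Dom f) \<and> C f g = idm (Cod f)"

definition is_iso ::
  "'m set \<Rightarrow> ('m \<Rightarrow> 'o) \<Rightarrow> ('m \<Rightarrow> 'o) \<Rightarrow> ('o \<Rightarrow> 'm) \<Rightarrow> ('m \<Rightarrow> 'm \<Rightarrow> 'm) \<Rightarrow> 'm \<Rightarrow> bool" where
  "is_iso Ar Dom Cod idm C f \<longleftrightarrow> (\<exists>g. is_inverse Ar Dom Cod idm C f g)"

definition inv_arr ::
  "'m set \<Rightarrow> ('m \<Rightarrow> 'o) \<Rightarrow> ('m \<Rightarrow> 'o) \<Rightarrow> ('o \<Rightarrow> 'm) \<Rightarrow> ('m \<Rightarrow> 'm \<Rightarrow> 'm) \<Rightarrow> 'm \<Rightarrow> 'm" where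
  "inv_arr Ar Dom Cod idm C f = (THE g. is_inverse Ar Dom Cod idm C f g)"

locale monoidal_category = category Ob Ar Dom Cod idm C
  for Ob :: "'o set" and Ar :: "'m set"
    and Dom :: "'m \<Rightarrow> 'o" and Cod :: "'m \<Rightarrow> 'o"
    and idm :: "'o \<Rightarrow> 'm" and C :: "'m \<Rightarrow> 'm \<Rightarrow> 'm" +
  fixes T :: "'o \<Rightarrow> 'o \<Rightarrow> 'o" and Tm :: "'m \<Rightarrow> 'm \<Rightarrow> 'm" and I :: 'o
    and asc :: "'o \<Rightarrow> 'o \<Rightarrow> 'o \<Rightarrow> 'm" and lu :: "'o \<Rightarrow> 'm" and ru :: "'o \<Rightarrow> 'm"
  assumes unit_ob: "I \<in> Ob"
    and tensor_ob: "\<lbrakk>a \<in> Ob; b \<in> Ob\<rbrakk> \<Longrightarrow> T a b \<in> Ob"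
    and tensor_ar: "\<lbrakk>f \<in> Ar; g \<in> Ar\<rbrakk> \<Longrightarrow> Tm f g \<in> Ar"
    and dom_tensor: "\<lbrakk>f \<in> Ar; g \<in> Ar\<rbrakk> \<Longrightarrow> Dom (Tm f g) = T (Dom f) (Dom g)"
    and cod_tensor: "\<lbrakk>f \<in> Ar; g \<in> Ar\<rbrakk> \<Longrightarrow> Cod (Tm f g) = T (Cod f) (Cod g)"
    and tensor_id: "\<lbrakk>a \<in> Ob; b \<in> Ob\<rbrakk> \<Longrightarrow> Tm (idm a) (idm b) = idm (T a b)"
    and tensor_comp: "\<lbrakk>f \<in> Ar; g \<in> Ar; f' \<in> Ar; g' \<in> Ar; Cod f = Dom g; Cod f' = Dom g'\<rbrakk>
                       \<Longrightarrow> Tm (C g f) (C g' f') = C (Tm g g') (Tm f f')"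
    and assoc_hom: "\<lbrakk>a \<in> Ob; b \<in> Ob; c \<in> Ob\<rbrakk>
                     \<Longrightarrow> asc a b c \<in> hom Ar Dom Cod (T (T a b) c) (T a (T b c))"
    and assoc_iso: "\<lbrakk>a \<in> Ob; b \<in> Ob; c \<in> Ob\<rbrakk> \<Longrightarrow> is_iso Ar Dom Cod idm C (asc a b c)"
    and assoc_nat: "\<lbrakk>f \<in> Ar; g \<in> Ar; h \<in> Ar\<rbrakk>
                     \<Longrightarrow> C (asc (Cod f) (Cod g) (Cod h)) (Tm (Tm f g) h)
                       = C (Tm f (Tm g h)) (asc (Dom f) (Dom g) (Dom h))"
    and lunit_hom: "a \<in> Ob \<Longrightarrow> lu a \<in> hom Ar Dom Cod (T I a) a"
    and lunit_iso: "a \<in> Ob \<Longrightarrow> is_iso Ar Dom Cod idm C (lu a)"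
    and lunit_nat: "f \<in> Ar \<Longrightarrow> C f (lu (Dom f)) = C (lu (Cod f)) (Tm (idm I) f)"
    and runit_hom: "a \<in> Ob \<Longrightarrow> ru a \<in> hom Ar Dom Cod (T a I) a"
    and runit_iso: "a \<in> Ob \<Longrightarrow> is_iso Ar Dom Cod idm C (ru a)"
    and runit_nat: "f \<in> Ar \<Longrightarrow> C f (ru (Dom f)) = C (ru (Cod f)) (Tm f (idm I))"
    and pentagon: "\<lbrakk>a \<in> Ob; b \<in> Ob; c \<in> Ob; d \<in> Ob\<rbrakk>
        \<Longrightarrow> C (asc a b (T c d)) (asc (T a b) c d)
          = C (Tm (idm a) (asc b c d)) (C (asc a (T b c) d) (Tm (asc a b c) (idm d)))"
    and triangle: "\<lbrakk>a \<in> Ob; b \<in> Ob\<rbrakk>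
        \<Longrightarrow> C (Tm (idm a) (lu b)) (asc a I b) = Tm (ru a) (idm b)"

locale braided_monoidal_category = monoidal_category Ob Ar Dom Cod idm C T Tm I asc lu ru
  for Ob :: "'o set" and Ar :: "'m set"
    and Dom :: "'m \<Rightarrow> 'o" and Cod :: "'m \<Rightarrow> 'o"
    and idm :: "'o \<Rightarrow> 'm" and C :: "'m \<Rightarrow> 'm \<Rightarrow> 'm"
    and T :: "'o \<Rightarrow> 'o \<Rightarrow> 'o" and Tm :: "'m \<Rightarrow> 'm \<Rightarrow> 'm" and I :: 'o
    and asc :: "'o \<Rightarrow> 'o \<Rightarrow> 'o \<Rightarrow> 'm" and lu :: "'o \<Rightarrow> 'm" and ru :: "'o \<Rightarrow> 'm" +
  fixes br :: "'o \<Rightarrow> 'o \<Rightarrow> 'm"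
  assumes braid_hom: "\<lbrakk>a \<in> Ob; b \<in> Ob\<rbrakk> \<Longrightarrow> br a b \<in> hom Ar Dom Cod (T a b) (T b a)"
    and braid_iso: "\<lbrakk>a \<in> Ob; b \<in> Ob\<rbrakk> \<Longrightarrow> is_iso Ar Dom Cod idm C (br a b)"
    and braid_nat: "\<lbrakk>f \<in> Ar; g \<in> Ar\<rbrakk>
        \<Longrightarrow> C (br (Cod f) (Cod g)) (Tm f g) = C (Tm g f) (br (Dom f) (Dom g))"
    and hexagon1: "\<lbrakk>a \<in> Ob; b \<in> Ob; c \<in> Ob\<rbrakk>
        \<Longrightarrow> C (asc b c a) (C (br a (T b c)) (asc a b c))
          = C (Tm (idm b) (br a c)) (C (asc b a c) (Tm (br a b) (idm c)))"
    and hexagon2: "\<lbrakk>a \<in> Ob; b \<in> Ob; c \<in> Ob\<rbrakk>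
        \<Longrightarrow> C (inv_arr Ar Dom Cod idm C (asc c a b))
              (C (br (T a b) c) (inv_arr Ar Dom Cod idm C (asc a b c)))
          = C (Tm (br a c) (idm b))
              (C (inv_arr Ar Dom Cod idm C (asc a c b)) (Tm (idm a) (br b c)))"

end

theory Submission
  imports Defs
begin

locale bx = braided_monoidal_category Ob Ar Dom Cod idm C T Tm I asc lu ru br
  for Ob :: "'o set" and Ar :: "'m set"
    and Dom :: "'m \<Rightarrow> 'o" and Cod :: "'m \<Rightarrow> 'o"
    and idm :: "'o \<Rightarrow> 'm" and C :: "'m \<Rightarrow> 'm \<Rightarrow> 'm"
    and T :: "'o \<Rightarrow> 'o \<Rightarrow> 'o" and Tm :: "'m \<Rightarrow> 'm \<Rightarrow> 'm" and I :: 'o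
    and asc :: "'o \<Rightarrow> 'o \<Rightarrow> 'o \<Rightarrow> 'm" and lu :: "'o \<Rightarrow> 'm" and ru :: "'o \<Rightarrow> 'm"
    and br :: "'o \<Rightarrow> 'o \<Rightarrow> 'm" +
  fixes X :: 'o
  assumes X: "X \<in> Ob"
begin

definition "EE = hom Ar Dom Cod X X"
definition "FF = hom Ar Dom Cod (T X X) (T X X)"
definition "LL f = Tm f (idm X)"
definition "RR f = Tm (idm X) f"

lemma XX: "T X X \<in> Ob" using X tensor_ob by blast

lemma E_comp[simp]: "f \<in> EE \<Longrightarrow> g \<in> EE \<Longrightarrow> C f g \<in> EE"
  unfolding EE_def hom_def using comp_ar dom_comp cod_comp by auto

lemma id_E[simp]: "idm X \<in> EE"
  unfolding EE_def hom_def using X id_ar dom_id cod_id by auto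

lemma F_comp[simp]: "f \<in> FF \<Longrightarrow> g \<in> FF \<Longrightarrow> C f g \<in> FF"
  unfolding FF_def hom_def using comp_ar dom_comp cod_comp by auto

lemma F_assoc: "f \<in> FF \<Longrightarrow> g \<in> FF \<Longrightarrow> h \<in> FF \<Longrightarrow> C h (C g f) = C (C h g) f"
  unfolding FF_def hom_def using comp_assoc by auto

lemma E_ar: "f \<in> EE \<Longrightarrow> f \<in> Ar \<and> Dom f = X \<and> Cod f = X"
  unfolding EE_def hom_def by auto

lemma Tm_F: "f \<in> EE \<Longrightarrow> g \<in> EE \<Longrightarrow> Tm f g \<in> FF"
  unfolding FF_def hom_def using E_ar tensor_ar dom_tensor cod_tensor by auto

lemma L_F[simp]: "f \<in> EE \<Longrightarrow> LL f \<in> FF" unfolding LL_def using Tm_F by simp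
lemma R_F[simp]: "f \<in> EE \<Longrightarrow> RR f \<in> FF" unfolding RR_def using Tm_F by simp

lemma idX: "f \<in> EE \<Longrightarrow> C (idm X) f = f \<and> C f (idm X) = f"
  using E_ar comp_id_left comp_id_right by metis

lemma L_comp: "f \<in> EE \<Longrightarrow> g \<in> EE \<Longrightarrow> LL (C f g) = C (LL f) (LL g)"
proof -
  assume a: "f \<in> EE" "g \<in> EE"
  have "Tm (C f g) (C (idm X) (idm X)) = C (Tm f (idm X)) (Tm g (idm X))"
    using a id_E E_ar tensor_comp by metis
  then show ?thesis unfolding LL_def using idX[OF id_E] by simp
qed

lemma R_comp: "f \<in> EE \<Longrightarrow> g \<in> EE \<Longrightarrow> RR (C f g) = C (RR f) (RR g)"
proof -
  assume a: "f \<in> EE" "g \<in> EE"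
  have "Tm (C (idm X) (idm X)) (C f g) = C (Tm (idm X) f) (Tm (idm X) g)"
    using a id_E E_ar tensor_comp by metis
  then show ?thesis unfolding RR_def using idX[OF id_E] by simp
qed

lemma Tm_LR: "f \<in> EE \<Longrightarrow> g \<in> EE \<Longrightarrow> Tm f g = C (LL f) (RR g)"
proof -
  assume a: "f \<in> EE" "g \<in> EE"
  have "Tm (C f (idm X)) (C (idm X) g) = C (Tm f (idm X)) (Tm (idm X) g)"
    using a id_E E_ar tensor_comp by metis
  then show ?thesis unfolding RR_def LL_def using idX a by simp
qed

lemma Tm_RL: "f \<in> EE \<Longrightarrow> g \<in> EE \<Longrightarrow> Tm f g = C (RR g) (LL f)"
proof -
  assume a: "f \<in> EE" "g \<in> EE"
  have "Tm (C (idm X) f) (C g (idm X)) = C (Tm (idm X) g) (Tm f (idm X))"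
    using a id_E E_ar tensor_comp by metis
  then show ?thesis unfolding RR_def LL_def using idX a by simp
qed

lemma b_F[simp]: "br X X \<in> FF"
  using braid_hom[OF X X] unfolding FF_def hom_def by auto

lemma nat: "f \<in> EE \<Longrightarrow> g \<in> EE \<Longrightarrow> C (br X X) (Tm f g) = C (Tm g f) (br X X)"
  using braid_nat E_ar by metis

lemma natL: "f \<in> EE \<Longrightarrow> C (br X X) (LL f) = C (RR f) (br X X)"
  unfolding LL_def RR_def using nat id_E by blast

lemma natR: "f \<in> EE \<Longrightarrow> C (br X X) (RR f) = C (LL f) (br X X)"
  unfolding LL_def RR_def using nat id_E by blast

lemma cancel:
  assumes "a \<in> FF" "c \<in> FF" "C a (br X X) = C c (br X X)"
  shows "a = c"
proof -
  obtain g where g: "is_inverse Ar Dom Cod idm C (br X X) g"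
    using braid_iso[OF X X] unfolding is_iso_def by blast
  have bh: "br X X \<in> Ar" "Dom (br X X) = T X X" "Cod (br X X) = T X X"
    using b_F unfolding FF_def hom_def by auto
  have g1: "g \<in> Ar" "Dom g = T X X" "C (br X X) g = idm (T X X)" "Cod g = T X X"
    using g bh unfolding is_inverse_def by auto
  have "\<And>x. x \<in> FF \<Longrightarrow> C (C x (br X X)) g = x"
  proof -
    fix x assume x: "x \<in> FF"
    have "C (C x (br X X)) g = C x (C (br X X) g)"
      using comp_assoc[of g "br X X" x] x g1 bh unfolding FF_def hom_def by auto
    also have "\<dots> = x" using g1 x comp_id_right[of x] unfolding FF_def hom_def by auto
    finally show "C (C x (br X X)) g = x" .
  qed
  then show ?thesis using assms by metis
qed

lemma swap:
  assumes "s \<in> EE" "t \<in> EE" "br X X = Tm s t"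
  shows "br X X = Tm t s"
proof -
  have "C (br X X) (br X X) = C (Tm t s) (br X X)" using nat[OF assms(1,2)] assms(3) by simp
  then show ?thesis using cancel Tm_F assms by auto
qed

lemma toL:
  assumes s: "s \<in> EE" and t: "t \<in> EE" and h: "br X X = Tm s t"
  shows "br X X = LL (C t s)"
proof -
  let ?b = "br X X"
  have hLR: "?b = C (LL s) (RR t)" using h Tm_LR s t by simp
  have hRL: "?b = C (RR t) (LL s)" using h Tm_RL s t by simp
  have A: "C (LL s) (RR (C t t)) = C (LL (C t s)) (RR t)"
  proof -
    have "C ?b (RR t) = C (LL t) ?b" using natR t by simp
    then have "C (C (LL s) (RR t)) (RR t) = C (LL t) (C (LL s) (RR t))" using hLR by simp
    then show ?thesis using s t by (simp add: R_comp L_comp F_assoc)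
  qed
  have bb: "C ?b ?b = C (LL s) (RR (C (C t t) s))"
  proof -
    have "C ?b ?b = C (C (RR t) (LL s)) ?b" using hRL by metis
    also have "\<dots> = C (RR t) (C ?b (RR s))" using natR[OF s] s t by (simp add: F_assoc)
    also have "\<dots> = C (RR t) (C (LL s) (RR (C t s)))" using hLR s t by (simp add: R_comp F_assoc)
    also have "\<dots> = C (LL s) (RR (C (C t t) s))"
    proof -
      have "C (RR t) (LL s) = C (LL s) (RR t)" using hLR hRL by simp
      then show ?thesis using s t by (simp add: R_comp F_assoc)
    qed
    finally show ?thesis .
  qed
  have lb: "C (LL (C t s)) ?b = C (LL s) (RR (C (C t t) s))"
  proof -
    have "C (LL (C t s)) ?b = C (LL t) (C (LL s) ?b)" using s t by (simp add: L_comp F_assoc)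
    also have "\<dots> = C (LL t) (C ?b (RR s))" using natR[OF s] by simp
    also have "\<dots> = C (LL (C t s)) (RR (C t s))" using hLR s t by (simp add: L_comp R_comp F_assoc)
    also have "\<dots> = C (LL s) (RR (C (C t t) s))"
      using A s t by (simp add: R_comp F_assoc)
    finally show ?thesis .
  qed
  show ?thesis using cancel bb lb s t by auto
qed

lemma LR_eq:
  assumes u: "u \<in> EE" and h: "br X X = LL u" and f: "f \<in> EE"
  shows "LL f = RR f"
proof -
  have hR: "br X X = RR u" using swap[OF u id_E] h unfolding LL_def RR_def by simp
  have "C (br X X) (LL f) = C (LL f) (br X X)"
    using Tm_LR[OF f u] Tm_RL[OF f u] hR by simp
  then have "C (RR f) (br X X) = C (LL f) (br X X)" using natL[OF f] by simp
  then show ?thesis using cancel f by auto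
qed

lemma all_eq:
  assumes s: "s \<in> EE" and t: "t \<in> EE" and LR: "\<And>f. f \<in> EE \<Longrightarrow> LL f = RR f"
  shows "Tm s t = LL (C s t)" "Tm s t = LL (C t s)"
proof -
  show "Tm s t = LL (C s t)" using Tm_LR[OF s t] LR[OF t] L_comp s t by simp
  show "Tm s t = LL (C t s)" using Tm_RL[OF s t] LR[OF t] L_comp s t by simp
qed

lemma main:
  assumes s: "s \<in> EE" and t: "t \<in> EE"
  shows "(br X X = Tm s t \<longleftrightarrow> br X X = Tm t s)
       \<and> (br X X = Tm s t \<longleftrightarrow> br X X = Tm (C t s) (idm X))
       \<and> (br X X = Tm s t \<longleftrightarrow> br X X = Tm (C s t) (idm X))
       \<and> (br X X = Tm s t \<longleftrightarrow> br X X = Tm (idm X) (C t s))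
       \<and> (br X X = Tm s t \<longleftrightarrow> br X X = Tm (idm X) (C s t))"
proof -
  have st: "C s t \<in> EE" and ts: "C t s \<in> EE" using s t by auto
  have key: "\<And>f. f \<in> EE \<Longrightarrow> LL f = RR f"
    if H: "br X X = Tm s t \<or> br X X = Tm t s \<or> br X X = LL (C t s) \<or> br X X = LL (C s t)
        \<or> br X X = RR (C t s) \<or> br X X = RR (C s t)"
  proof -
    obtain u where u: "u \<in> EE" "br X X = LL u"
    proof -
      from H show thesis
      proof (elim disjE)
        assume "br X X = Tm s t" then show thesis using toL s t that ts by blast
      next
        assume "br X X = Tm t s" then show thesis using toL s t that st by blast
      next
        assume "br X X = LL (C t s)" then show thesis using that ts by blast
      next
        assume "br X X = LL (C s t)" then show thesis using that st by blast
      next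
        assume "br X X = RR (C t s)" then show thesis using that ts swap[OF id_E ts]
          unfolding LL_def RR_def by blast
      next
        assume "br X X = RR (C s t)" then show thesis using that st swap[OF id_E st]
          unfolding LL_def RR_def by blast
      qed
    qed
    then show "\<And>f. f \<in> EE \<Longrightarrow> LL f = RR f" using LR_eq by blast
  qed
  have eqs: "Tm s t = Tm t s \<and> Tm s t = LL (C t s) \<and> Tm s t = LL (C s t)
     \<and> Tm s t = RR (C t s) \<and> Tm s t = RR (C s t)"
    if LR: "\<And>f. f \<in> EE \<Longrightarrow> LL f = RR f"
    using all_eq[OF s t LR] all_eq[OF t s LR] LR[OF st] LR[OF ts] by simp
  show ?thesis unfolding LL_def[symmetric] RR_def[symmetric]
    using key eqs by metis
qed

end

theorem proposition3p1:
  fixes Ob :: "'o set" and Ar :: "'m set"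
    and Dom :: "'m \<Rightarrow> 'o" and Cod :: "'m \<Rightarrow> 'o"
    and idm :: "'o \<Rightarrow> 'm" and C :: "'m \<Rightarrow> 'm \<Rightarrow> 'm"
    and T :: "'o \<Rightarrow> 'o \<Rightarrow> 'o" and Tm :: "'m \<Rightarrow> 'm \<Rightarrow> 'm" and I :: 'o
    and asc :: "'o \<Rightarrow> 'o \<Rightarrow> 'o \<Rightarrow> 'm" and lu :: "'o \<Rightarrow> 'm" and ru :: "'o \<Rightarrow> 'm"
    and br :: "'o \<Rightarrow> 'o \<Rightarrow> 'm"
    and X :: 'o and s t :: 'm
  assumes "braided_monoidal_category Ob Ar Dom Cod idm C T Tm I asc lu ru br"
    and "X \<in> Ob"
    and "s \<in> hom Ar Dom Cod X X" and "t \<in> hom Ar Dom Cod X X"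
  shows "(br X X = Tm s t \<longleftrightarrow> br X X = Tm t s)
       \<and> (br X X = Tm s t \<longleftrightarrow> br X X = Tm (C t s) (idm X))
       \<and> (br X X = Tm s t \<longleftrightarrow> br X X = Tm (C s t) (idm X))
       \<and> (br X X = Tm s t \<longleftrightarrow> br X X = Tm (idm X) (C t s))
       \<and> (br X X = Tm s t \<longleftrightarrow> br X X = Tm (idm X) (C s t))"
proof -
  interpret bx Ob Ar Dom Cod idm C T Tm I asc lu ru br X
    using assms(1,2) by (simp add: bx_def bx_axioms_def)
  show ?thesis using main assms(3,4) unfolding EE_def by blast
qed

end
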